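(* Let $Y_0$ be $\mathbb Z_+$-valued with $(m-1)\mathbf E(Y_0m^{Y_0})=\mathbf E(m^{Y_0})<\infty$. Fix an integer $i\ge0$ and let $N_n$ denote either $N_n^\#$ or $N_n^{(i)}$. Then for all $n\ge1$, $$\mathbf E[m^{Y_n}(1+Y_n)N_n]=\mathbf E[m^{Y_0}(1+Y_0)N_0]\prod_{k=0}^{n-1}[\mathbf E(m^{Y_k})]^{m-1}.$$ (Here $\mathbf E[m^{Y_0}(1+Y_0)N_0^{(i)}]=m^i(1+i)\mathbf P(Y_0=i)$ and $\mathbf E[m^{Y_0}(1+Y_0)N_0^\#]=\mathbf E[m^{Y_0}(1+Y_0)]$.)
   Context: Fix an integer $m\ge2$. Hierarchical representation: on a reversed $m$-ary tree (each vertex $x$ of generation $|x|\ge1$ has $m$ parents $x^{(1)},\dots,x^{(m)}$ in generation $|x|-1$ and each vertex a unique child in the next generation), let $Y(x)$, $|x|=0$, be i.i.d. with the law of $Y_0$ and $Y(x):=(Y(x^{(1)})+\cdots+Y(x^{(m)})-1)^+$ for $|x|\ge1$. A path leading to $x$ is $(x_0,\dots,x_{|x|}=x)$ with $|x_j|=j$ and $x_{j+1}$ the child of $x_j$; it is open if for every vertex $z$ on it with $|z|\ge1$, $Y(z^{(1)})+\cdots+Y(z^{(m)})\ge1$ (paths with $|x|=0$ are open). $N^\#(x)$ is the number of open paths leading to $x$, $N^{(i)}(x)$ the number of those with $Y(x_0)=i$. For a fixed vertex $\mathfrak e_n$ of generation $n$ (with $\mathfrak e_{n+1}$ the child of $\mathfrak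 e_n$), $N_n^\#:=N^\#(\mathfrak e_n)$, $N_n^{(i)}:=N^{(i)}(\mathfrak e_n)$, $Y_n:=Y(\mathfrak e_n)$; $Y_n$ has the law of the $n$-th term of the recursive system $Y_{n+1}\overset d=(Y_{n,1}+\cdots+Y_{n,m}-1)^+$. *)

theory Defs
  imports "HOL-Probability.Probability"
begin

text \<open>The part of the reversed m-ary tree above the fixed vertex e_n.
  A vertex is addressed by a list xs of parent choices (entries < m),
  read from e_n upwards; the vertex with address xs at generation d has
  parents xs @ [j], j < m, at generation d - 1. Generation-0 vertices
  (the leaves above e_n) carry the i.i.d. initial values y.\<close>

definition leaves :: "nat \<Rightarrow> nat \<Rightarrow> nat list set" where
  "leaves m n = {zs. length zs = n \<and> set zs \<subseteq> {..<m}}"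

text \<open>Yval m d y xs = Y of the vertex at generation d with address xs;
  nat subtraction realises the positive part.\<close>
fun Yval :: "nat \<Rightarrow> nat \<Rightarrow> (nat list \<Rightarrow> nat) \<Rightarrow> nat list \<Rightarrow> nat" where
  "Yval m 0 y xs = y xs"
| "Yval m (Suc d) y xs = (\<Sum>j<m. Yval m d y (xs @ [j])) - 1"

text \<open>A path leading to the vertex (generation d, address xs) is given by
  the further choices zs (length d); its vertex at generation k is
  xs @ take (d - k) zs.\<close>
definition open_path :: "nat \<Rightarrow> (nat list \<Rightarrow> nat) \<Rightarrow> nat \<Rightarrow> nat list \<Rightarrow> nat list \<Rightarrow> bool" where
  "open_path m y d xs zs \<longleftrightarrow> zs \<in> leaves m d \<and>
     (\<forall>k\<in>{1..d}. (\<Sum>j<m. Yval m (k - 1) y (xs @ take (d - k) zs @ [j])) \<ge> 1)"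

definition Nsharp :: "nat \<Rightarrow> nat \<Rightarrow> (nat list \<Rightarrow> nat) \<Rightarrow> nat" where
  "Nsharp m n y = card {zs. open_path m y n [] zs}"

definition Ni :: "nat \<Rightarrow> nat \<Rightarrow> nat \<Rightarrow> (nat list \<Rightarrow> nat) \<Rightarrow> nat" where
  "Ni m i n y = card {zs. open_path m y n [] zs \<and> y zs = i}"

definition tree_pmf :: "nat \<Rightarrow> nat pmf \<Rightarrow> nat \<Rightarrow> (nat list \<Rightarrow> nat) pmf" where
  "tree_pmf m p n = Pi_pmf (leaves m n) 0 (\<lambda>_. p)"

end

theory Submission
  imports Defs
begin

definition sh :: "nat \<Rightarrow> (nat list \<Rightarrow> nat) \<Rightarrow> nat list \<Rightarrow> nat" where
  "sh j y = (\<lambda>zs. y (j # zs))"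

lemma Yval_Cons: "Yval m d y (j # xs) = Yval m d (sh j y) xs"
  by (induction d arbitrary: xs) (simp_all add: sh_def)

lemma Yval_Suc0: "Yval m (Suc d) y [] = (\<Sum>j<m. Yval m d (sh j y) []) - 1"
  by (simp add: Yval_Cons)

lemma leaves_Suc: "leaves m (Suc n) = (\<Union>j<m. (Cons j) ` leaves m n)"
  by (auto simp: leaves_def length_Suc_conv)

lemma finite_leaves: "finite (leaves m n)"
proof -
  have "leaves m n = {xs. set xs \<subseteq> {..<m} \<and> length xs = n}" by (auto simp: leaves_def)
  thus ?thesis by (simp add: finite_lists_length_eq)
qed

lemma Cons_leaves: "j # zs \<in> leaves m (Suc n) \<longleftrightarrow> j < m \<and> zs \<in> leaves m n"
  by (auto simp: leaves_def)

lemma open_path_Suc: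
  "open_path m y (Suc n) [] zs \<longleftrightarrow> (\<exists>j zs'. zs = j # zs' \<and> j < m \<and>
     1 \<le> (\<Sum>l<m. Yval m n (sh l y) []) \<and> open_path m (sh j y) n [] zs')"
proof (cases zs)
  case Nil
  then show ?thesis by (auto simp: open_path_def leaves_def)
next
  case (Cons j zs')
  have I: "{Suc 0..Suc n} = insert (Suc n) {Suc 0..n}" by auto
  have K: "\<And>k l. Suc 0 \<le> k \<Longrightarrow> k \<le> n \<Longrightarrow> Yval m (k - Suc 0) y (take (Suc n - k) (j # zs') @ [l])
       = Yval m (k - Suc 0) (sh j y) (take (n - k) zs' @ [l])"
  proof -
    fix k l assume "Suc 0 \<le> k" "k \<le> n"
    then have "Suc n - k = Suc (n - k)" by auto
    then show "Yval m (k - Suc 0) y (take (Suc n - k) (j # zs') @ [l])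
       = Yval m (k - Suc 0) (sh j y) (take (n - k) zs' @ [l])"
      by (simp add: Yval_Cons)
  qed
  have KB: "(\<forall>k\<in>{Suc 0..n}. Suc 0 \<le> (\<Sum>ja<m. Yval m (k - Suc 0) y (take (Suc n - k) (j # zs') @ [ja])))
     \<longleftrightarrow> (\<forall>k\<in>{Suc 0..n}. Suc 0 \<le> (\<Sum>ja<m. Yval m (k - Suc 0) (sh j y) (take (n - k) zs' @ [ja])))"
    by (rule ball_cong) (auto simp: K)
  show ?thesis
    unfolding Cons open_path_def
    by (simp add: I Cons_leaves Yval_Cons KB) blast
qed

lemma card_Suc_gen:
  fixes m :: nat
  assumes P: "\<And>zs. Q zs \<longleftrightarrow> (\<exists>j zs'. zs = j # zs' \<and> j < m \<and> c \<and> R j zs')"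
    and F: "\<And>j. finite {zs. R j zs}"
  shows "card {zs. Q zs} = (if c then \<Sum>j<m. card {zs. R j zs} else 0)"
proof (cases c)
  case True
  have "{zs. Q zs} = (\<Union>j<m. Cons j ` {zs. R j zs})" using True by (auto simp: P)
  also have "card \<dots> = (\<Sum>j<m. card (Cons j ` {zs. R j zs}))"
    by (rule card_UN_disjoint) (auto simp: F)
  also have "\<dots> = (\<Sum>j<m. card {zs. R j zs})"
    by (intro sum.cong refl card_image) (auto simp: inj_on_def)
  finally show ?thesis using True by simp
next
  case False
  then have "{zs. Q zs} = {}" by (auto simp: P)
  then show ?thesis using False by simp
qed

lemma finite_open: "finite {zs. open_path m y n xs zs \<and> Z zs}"
  by (rule finite_subset[OF _ finite_leaves[of m n]]) (auto simp: open_path_def)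

lemma Nsharp_Suc: "Nsharp m (Suc n) y = (if 1 \<le> (\<Sum>l<m. Yval m n (sh l y) []) then \<Sum>j<m. Nsharp m n (sh j y) else 0)"
  unfolding Nsharp_def
  by (rule card_Suc_gen[OF open_path_Suc]) (use finite_open[where Z="\<lambda>_. True"] in simp)

lemma Ni_Suc: "Ni m i (Suc n) y = (if 1 \<le> (\<Sum>l<m. Yval m n (sh l y) []) then \<Sum>j<m. Ni m i n (sh j y) else 0)"
  unfolding Ni_def
  by (rule card_Suc_gen) (auto simp: open_path_Suc sh_def finite_open)

lemma tree_supp:
  assumes "y \<in> set_pmf (tree_pmf m p n)" "xs \<notin> leaves m n"
  shows "y xs = 0"
  using set_Pi_pmf_subset[OF finite_leaves, of m n 0 "\<lambda>_. p"] assms unfolding tree_pmf_def by blast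

lemma pmf_tree:
  assumes "\<forall>xs. xs \<notin> leaves m n \<longrightarrow> y xs = 0"
  shows "pmf (tree_pmf m p n) y = (\<Prod>xs\<in>leaves m n. pmf p (y xs))"
  using assms unfolding tree_pmf_def by (simp add: pmf_Pi finite_leaves)

lemma pmf_tree_out:
  assumes "xs \<notin> leaves m n" "y xs \<noteq> 0"
  shows "pmf (tree_pmf m p n) y = 0"
  using assms unfolding tree_pmf_def by (auto simp: pmf_Pi finite_leaves)

lemma prod_leaves_Suc:
  "(\<Prod>xs\<in>leaves m (Suc n). g xs) = (\<Prod>l<m. \<Prod>zs\<in>leaves m n. g (l # zs))"
proof -
  have "(\<Prod>xs\<in>leaves m (Suc n). g xs) = (\<Prod>l<m. \<Prod>xs\<in>Cons l ` leaves m n. g xs)"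
    unfolding leaves_Suc by (rule prod.UNION_disjoint) (auto simp: finite_leaves)
  also have "\<dots> = (\<Prod>l<m. \<Prod>zs\<in>leaves m n. g (l # zs))"
    by (rule prod.cong[OF refl]) (simp add: prod.reindex inj_on_def)
  finally show ?thesis .
qed

lemma tree_Suc:
  "map_pmf (\<lambda>y l. sh l y) (tree_pmf m p (Suc n)) = Pi_pmf {..<m} (\<lambda>_. 0) (\<lambda>_. tree_pmf m p n)"
proof (rule pmf_eqI)
  fix F :: "nat \<Rightarrow> nat list \<Rightarrow> nat"
  let ?T = "tree_pmf m p (Suc n)"
  let ?G = "\<lambda>y l. sh l y"
  have lhs: "pmf (map_pmf ?G ?T) F = measure ?T (?G -` {F} \<inter> set_pmf ?T)"
    by (simp add: pmf_map measure_Int_set_pmf)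
  show "pmf (map_pmf ?G ?T) F = pmf (Pi_pmf {..<m} (\<lambda>_. 0) (\<lambda>_. tree_pmf m p n)) F"
  proof (cases "(\<forall>l. l \<notin> {..<m} \<longrightarrow> F l = (\<lambda>_. 0)) \<and> (\<forall>l<m. \<forall>zs. zs \<notin> leaves m n \<longrightarrow> F l zs = 0)")
    case True
    define y0 where "y0 = (\<lambda>xs. case xs of [] \<Rightarrow> 0 | l # zs \<Rightarrow> F l zs)"
    have y0out: "\<forall>xs. xs \<notin> leaves m (Suc n) \<longrightarrow> y0 xs = 0"
    proof (intro allI impI)
      fix xs assume xs: "xs \<notin> leaves m (Suc n)"
      show "y0 xs = 0"
      proof (cases xs)
        case (Cons l zs)
        then show ?thesis using xs True by (cases "l < m") (auto simp: y0_def Cons_leaves fun_eq_iff)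
      qed (simp add: y0_def)
    qed
    have uniq: "y = y0" if y: "y \<in> set_pmf ?T" "?G y = F" for y
    proof (rule ext)
      fix xs show "y xs = y0 xs"
      proof (cases xs)
        case Nil
        then show ?thesis using tree_supp[OF y(1), of xs] by (simp add: y0_def leaves_def)
      next
        case (Cons l zs)
        then show ?thesis using y(2) by (auto simp: y0_def sh_def fun_eq_iff)
      qed
    qed
    have Gy0: "?G y0 = F" by (auto simp: y0_def sh_def fun_eq_iff)
    have "?G -` {F} \<inter> set_pmf ?T = {y0} \<inter> set_pmf ?T"
      using uniq Gy0 by blast
    then have "pmf (map_pmf ?G ?T) F = pmf ?T y0"
      by (simp add: lhs measure_Int_set_pmf measure_pmf_single)
    also have "\<dots> = (\<Prod>l<m. \<Prod>zs\<in>leaves m n. pmf p (F l zs))"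
      by (subst pmf_tree[OF y0out]) (simp add: prod_leaves_Suc y0_def)
    also have "\<dots> = (\<Prod>l<m. pmf (tree_pmf m p n) (F l))"
      using True by (intro prod.cong refl pmf_tree[symmetric]) auto
    also have "\<dots> = pmf (Pi_pmf {..<m} (\<lambda>_. 0) (\<lambda>_. tree_pmf m p n)) F"
      using True by (simp add: pmf_Pi)
    finally show ?thesis .
  next
    case False
    have no: False if y: "y \<in> set_pmf ?T" "?G y = F" for y
    proof -
      have "F l zs = 0" if "\<not> (l < m \<and> zs \<in> leaves m n)" for l zs
      proof -
        have "F l zs = y (l # zs)" using y(2) by (auto simp: sh_def fun_eq_iff)
        also have "\<dots> = 0" using tree_supp[OF y(1)] that by (simp add: Cons_leaves)
        finally show ?thesis .
      qed
      then show False using False by (auto simp: fun_eq_iff)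
    qed
    have "?G -` {F} \<inter> set_pmf ?T = {}" using no by blast
    then have L: "pmf (map_pmf ?G ?T) F = 0" by (simp add: lhs)
    have "pmf (Pi_pmf {..<m} (\<lambda>_. 0) (\<lambda>_. tree_pmf m p n)) F = 0"
    proof (cases "\<forall>l. l \<notin> {..<m} \<longrightarrow> F l = (\<lambda>_. 0)")
      case True
      with False obtain l zs where "l < m" "zs \<notin> leaves m n" "F l zs \<noteq> 0" by auto
      then have "pmf (tree_pmf m p n) (F l) = 0" by (intro pmf_tree_out)
      then show ?thesis using True \<open>l < m\<close> by (auto simp: pmf_Pi intro!: prod_zero)
    next
      case False
      then show ?thesis by (subst pmf_Pi) auto
    qed
    then show ?thesis using L by simp
  qed
qed

lemma int_prod:
  "(\<integral>\<^sup>+y. (\<Prod>l<m. f l (sh l y)) \<partial>tree_pmf m p (Suc n)) = (\<Prod>l<m. \<integral>\<^sup>+x. f l x \<partial>tree_pmf m p n)"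
proof -
  have "(\<integral>\<^sup>+y. (\<Prod>l<m. f l (sh l y)) \<partial>tree_pmf m p (Suc n))
      = (\<integral>\<^sup>+F. (\<Prod>l<m. f l (F l)) \<partial>map_pmf (\<lambda>y l. sh l y) (tree_pmf m p (Suc n)))"
    by (simp add: nn_integral_map_pmf)
  also have "\<dots> = (\<Prod>l<m. \<integral>\<^sup>+x. f l x \<partial>tree_pmf m p n)"
    unfolding tree_Suc by (rule nn_integral_prod_Pi_pmf) simp
  finally show ?thesis .
qed

lemma prod_pick:
  fixes Y Nv :: "nat \<Rightarrow> nat" and m :: nat
  assumes "j < m" "k < m"
  shows "(\<Prod>l<m. m ^ Y l * (if l = k then Y l else 1) * (if l = j then Nv l else 1))
       = m ^ (\<Sum>l<m. Y l) * Y k * Nv j"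
  using assms by (simp add: prod.distrib power_sum)

lemma natid1:
  fixes Y Nv :: "nat \<Rightarrow> nat" and m :: nat
  defines "S \<equiv> \<Sum>l<m. Y l"
  shows "m * (m ^ (S - 1) * (1 + (S - 1)) * (if 1 \<le> S then \<Sum>j<m. Nv j else 0))
     = (\<Sum>j<m. \<Sum>k<m. \<Prod>l<m. m ^ Y l * (if l = k then Y l else 1) * (if l = j then Nv l else 1))"
proof -
  have "(\<Sum>j<m. \<Sum>k<m. \<Prod>l<m. m ^ Y l * (if l = k then Y l else 1) * (if l = j then Nv l else 1))
      = (\<Sum>j<m. \<Sum>k<m. m ^ S * Y k * Nv j)"
    unfolding S_def by (intro sum.cong refl prod_pick) auto
  also have "\<dots> = (\<Sum>j<m. Nv j * (m ^ S * S))"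
    by (intro sum.cong refl) (simp add: S_def sum_distrib_left sum_distrib_right mult_ac)
  also have "\<dots> = m ^ S * S * (\<Sum>j<m. Nv j)"
    by (simp add: sum_distrib_left sum_distrib_right mult_ac)
  finally have R: "(\<Sum>j<m. \<Sum>k<m. \<Prod>l<m. m ^ Y l * (if l = k then Y l else 1) * (if l = j then Nv l else 1))
      = m ^ S * S * (\<Sum>j<m. Nv j)" .
  show ?thesis
  proof (cases "S = 0")
    case True then show ?thesis unfolding R by simp
  next
    case False
    then have "m * m ^ (S - 1) = m ^ S" by (cases S) auto
    then show ?thesis unfolding R using False by (simp add: mult.assoc mult.left_commute)
  qed
qed

lemma prod_ind:
  fixes Y :: "nat \<Rightarrow> nat" and m :: nat
  shows "(\<Prod>l<m. (if Y l = 0 then 1 else 0::nat)) = (if (\<Sum>l<m. Y l) = 0 then 1 else 0)"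
  by (auto simp: prod_zero_iff)

lemma natid2:
  fixes Y :: "nat \<Rightarrow> nat" and m :: nat
  assumes "m \<ge> 1"
  defines "S \<equiv> \<Sum>l<m. Y l"
  shows "m * m ^ (S - 1) = (\<Prod>l<m. m ^ Y l) + (m - 1) * (\<Prod>l<m. (if Y l = 0 then 1 else 0))"
proof (cases "S = 0")
  case True
  then have "sum Y {..<m} = 0" by (simp add: S_def)
  then show ?thesis using assms unfolding prod_ind by (simp add: power_sum[symmetric] S_def)
next
  case False
  then have "m * m ^ (S - 1) = m ^ S" by (cases S) auto
  moreover have "sum Y {..<m} \<noteq> 0" using False by (simp add: S_def)
  ultimately show ?thesis unfolding prod_ind by (simp add: power_sum[symmetric] S_def) fastforce
qed

lemma natid3:
  fixes Y :: "nat \<Rightarrow> nat" and m :: nat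
  assumes "m \<ge> 1"
  defines "S \<equiv> \<Sum>l<m. Y l"
  shows "m * ((S - 1) * m ^ (S - 1)) + m * m ^ (S - 1)
     = (\<Sum>k<m. \<Prod>l<m. m ^ Y l * (if l = k then Y l else 1)) + m * (\<Prod>l<m. (if Y l = 0 then 1 else 0))"
proof -
  have "(\<Sum>k<m. \<Prod>l<m. m ^ Y l * (if l = k then Y l else 1)) = (\<Sum>k<m. m ^ S * Y k)"
    unfolding S_def by (intro sum.cong refl) (simp add: prod.distrib power_sum)
  also have "\<dots> = m ^ S * S" by (simp add: S_def sum_distrib_left)
  finally have R: "(\<Sum>k<m. \<Prod>l<m. m ^ Y l * (if l = k then Y l else 1)) = m ^ S * S" .
  show ?thesis
  proof (cases "S = 0")
    case True
    then show ?thesis unfolding R prod_ind S_def[symmetric] by simp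
  next
    case False
    then have e: "m * m ^ (S - 1) = m ^ S" by (cases S) auto
    have "m * ((S - 1) * m ^ (S - 1)) + m * m ^ (S - 1) = (S - 1) * m ^ S + m ^ S"
      using e by (metis mult.left_commute)
    also have "\<dots> = m ^ S * S" using False by (cases S) (auto simp: algebra_simps)
    finally show ?thesis unfolding R prod_ind S_def[symmetric] using False by simp
  qed
qed

lemma prod_if1:
  fixes A B :: "'a::comm_monoid_mult" and m :: nat
  assumes "k < m"
  shows "(\<Prod>l<m. if l = k then B else A) = B * A ^ (m - 1)"
proof -
  have "(\<Prod>l<m. if l = k then B else A) = (if k = k then B else A) * (\<Prod>l\<in>{..<m} - {k}. if l = k then B else A)"
    using assms by (intro prod.remove) auto
  also have "(\<Prod>l\<in>{..<m} - {k}. if l = k then B else A) = (\<Prod>l\<in>{..<m} - {k}. A)"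
    by (intro prod.cong) auto
  finally show ?thesis using assms by simp
qed

lemma prod_ifs:
  fixes A B C D :: "'a::comm_monoid_mult" and m :: nat
  assumes "j < m" "k < m"
  shows "(\<Prod>l<m. if l = k then (if l = j then C else B) else (if l = j then D else A))
       = (if k = j then C * A ^ (m - 1) else B * D * A ^ (m - 2))"
proof (cases "k = j")
  case True
  then have "(\<Prod>l<m. if l = k then (if l = j then C else B) else (if l = j then D else A))
     = (\<Prod>l<m. if l = k then C else A)" by (intro prod.cong) auto
  then show ?thesis using True prod_if1[OF assms(2)] by simp
next
  case False
  let ?f = "\<lambda>l. if l = k then (if l = j then C else B) else (if l = j then D else A)"
  have "(\<Prod>l<m. ?f l) = ?f k * (\<Prod>l\<in>{..<m} - {k}. ?f l)"
    using assms by (intro prod.remove) auto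
  also have "(\<Prod>l\<in>{..<m} - {k}. ?f l) = ?f j * (\<Prod>l\<in>{..<m} - {k} - {j}. ?f l)"
    using assms False by (intro prod.remove) auto
  also have "(\<Prod>l\<in>{..<m} - {k} - {j}. ?f l) = (\<Prod>l\<in>{..<m} - {k} - {j}. A)"
    by (intro prod.cong) auto
  also have "\<dots> = A ^ (m - 2)" using assms False by (simp add: card_Diff_singleton numeral_2_eq_2)
  finally show ?thesis using False by (simp add: mult.assoc)
qed

lemma sum_if1:
  fixes X Z :: "'a::comm_semiring_1" and m :: nat
  assumes "j < m"
  shows "(\<Sum>k<m. if k = j then X else Z) = X + of_nat (m - 1) * Z"
proof -
  have "(\<Sum>k<m. if k = j then X else Z) = (if j = j then X else Z) + (\<Sum>k\<in>{..<m} - {j}. if k = j then X else Z)"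
    using assms by (intro sum.remove) auto
  also have "(\<Sum>k\<in>{..<m} - {j}. if k = j then X else Z) = (\<Sum>k\<in>{..<m} - {j}. Z)"
    by (intro sum.cong) auto
  finally show ?thesis using assms by (simp add: of_nat_diff)
qed

lemma alg:
  fixes A B Q A' B' :: ennreal and M :: nat
  assumes M: "M \<ge> 2" and inv: "of_nat (M - 1) * B = A" and Af: "A < \<infinity>" and Qf: "Q < \<infinity>"
    and e1: "of_nat M * A' = A ^ M + of_nat (M - 1) * Q ^ M"
    and e2: "of_nat M * B' + of_nat M * A' = of_nat M * B * A ^ (M - 1) + of_nat M * Q ^ M"
  shows "of_nat (M - 1) * B' = A' \<and> A' < \<infinity>"
proof -
  have Mf: "(of_nat M :: ennreal) \<noteq> \<infinity>" "(of_nat M :: ennreal) \<noteq> 0"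
       "(of_nat (M-1) :: ennreal) \<noteq> \<infinity>" using M by auto
  have "A ^ M + of_nat (M - 1) * Q ^ M < \<infinity>"
    using Af Qf by (simp add: power_less_top_ennreal ennreal_mult_less_top of_nat_less_top)
  then have MA: "of_nat M * A' < \<infinity>" using e1 by simp
  have A'le: "A' \<le> of_nat M * A'"
  proof -
    have "A' = 1 * A'" by simp
    also have "\<dots> \<le> of_nat M * A'" using M by (intro mult_right_mono) auto
    finally show ?thesis .
  qed
  have A'f: "A' < \<infinity>" using A'le MA by (rule le_less_trans)
  have "of_nat (M-1) * (of_nat M * B' + of_nat M * A')
     = of_nat M * (of_nat (M-1) * B) * A ^ (M - 1) + of_nat M * (of_nat (M-1) * Q ^ M)"
    unfolding e2 by (simp add: algebra_simps)
  also have "\<dots> = of_nat M * (A ^ M + of_nat (M - 1) * Q ^ M)"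
  proof -
    have pw: "A * A ^ (M - 1) = A ^ M" using M by (cases M) auto
    show ?thesis by (simp only: inv mult.assoc pw distrib_left)
  qed
  also have "\<dots> = of_nat M * (of_nat M * A')" by (simp add: e1)
  also have "\<dots> = of_nat (M-1) * (of_nat M * A') + of_nat M * A'"
  proof -
    have "M = Suc (M - 1)" using M by simp
    then have "(of_nat M :: ennreal) = of_nat (M - 1) + 1" by (metis of_nat_Suc add.commute)
    then show ?thesis by (metis (no_types) distrib_right mult_1)
  qed
  finally have "of_nat (M-1) * (of_nat M * B') + of_nat (M-1) * (of_nat M * A')
      = of_nat (M-1) * (of_nat M * A') + of_nat M * A'" by (simp add: distrib_left)
  then have "of_nat (M-1) * (of_nat M * B') = of_nat M * A'"
    using Mf A'f by (subst (asm) add.commute) (auto simp: ennreal_add_left_cancel ennreal_mult_eq_top_iff)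
  then have "of_nat M * (of_nat (M-1) * B') = of_nat M * A'" by (simp add: mult_ac)
  then have "of_nat (M-1) * B' = A'" using Mf by (simp add: ennreal_mult_cancel_left)
  then show ?thesis using A'f by simp
qed


lemma stepE:
  fixes m n :: nat and p :: "nat pmf" and N :: "nat \<Rightarrow> (nat list \<Rightarrow> nat) \<Rightarrow> nat"
  assumes m2: "m \<ge> 2"
    and NS: "\<And>y. N (Suc n) y = (if 1 \<le> (\<Sum>l<m. Yval m n (sh l y) []) then \<Sum>j<m. N n (sh j y) else 0)"
    and inv: "of_nat (m - 1) * (\<integral>\<^sup>+y. of_nat (Yval m n y [] * m ^ Yval m n y []) \<partial>tree_pmf m p n)
            = (\<integral>\<^sup>+y. of_nat (m ^ Yval m n y []) \<partial>tree_pmf m p n)"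
  shows "(\<integral>\<^sup>+y. of_nat (m ^ Yval m (Suc n) y [] * (1 + Yval m (Suc n) y []) * N (Suc n) y) \<partial>tree_pmf m p (Suc n))
       = (\<integral>\<^sup>+y. of_nat (m ^ Yval m n y [] * (1 + Yval m n y []) * N n y) \<partial>tree_pmf m p n)
         * (\<integral>\<^sup>+y. of_nat (m ^ Yval m n y []) \<partial>tree_pmf m p n) ^ (m - 1)"
proof -
  define Yn where "Yn = (\<lambda>x. Yval m n x [])"
  define f :: "nat \<Rightarrow> nat \<Rightarrow> nat \<Rightarrow> (nat list \<Rightarrow> nat) \<Rightarrow> ennreal" where
    "f j k l x = of_nat (m ^ Yn x * (if l = k then Yn x else 1) * (if l = j then N n x else 1))" for j k l x
  define A where "A = (\<integral>\<^sup>+x. of_nat (m ^ Yn x) \<partial>tree_pmf m p n)"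
  define B where "B = (\<integral>\<^sup>+x. of_nat (Yn x * m ^ Yn x) \<partial>tree_pmf m p n)"
  define C where "C = (\<integral>\<^sup>+x. of_nat (m ^ Yn x * Yn x * N n x) \<partial>tree_pmf m p n)"
  define D where "D = (\<integral>\<^sup>+x. of_nat (m ^ Yn x * N n x) \<partial>tree_pmf m p n)"
  have invAB: "of_nat (m - 1) * B = A" using inv by (simp add: A_def B_def Yn_def)
  have pt: "of_nat m * of_nat (m ^ Yval m (Suc n) y [] * (1 + Yval m (Suc n) y []) * N (Suc n) y)
      = (\<Sum>j<m. \<Sum>k<m. \<Prod>l<m. f j k l (sh l y))" for y
  proof -
    have e: "m * (m ^ Yval m (Suc n) y [] * (1 + Yval m (Suc n) y []) * N (Suc n) y)
      = (\<Sum>j<m. \<Sum>k<m. \<Prod>l<m. m ^ Yn (sh l y) * (if l = k then Yn (sh l y) else 1) * (if l = j then N n (sh l y) else 1))"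
      unfolding Yval_Suc0 NS Yn_def by (rule natid1)
    have r: "(\<Sum>j<m. \<Sum>k<m. \<Prod>l<m. f j k l (sh l y))
      = of_nat (\<Sum>j<m. \<Sum>k<m. \<Prod>l<m. m ^ Yn (sh l y) * (if l = k then Yn (sh l y) else 1) * (if l = j then N n (sh l y) else 1))"
      unfolding f_def by (simp only: of_nat_sum of_nat_prod)
    show ?thesis unfolding r e[symmetric] by simp
  qed
  have intI: "(\<integral>\<^sup>+x. f j k l x \<partial>tree_pmf m p n)
      = (if l = k then (if l = j then C else B) else (if l = j then D else A))" for j k l
    by (cases "l = k"; cases "l = j") (simp_all add: f_def A_def B_def C_def D_def mult_ac)
  have "m - 1 = Suc (m - 2)" using m2 by simp
  then have pw: "A * A ^ (m - 2) = A ^ (m - 1)" by simp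
  have inner: "(\<Sum>k<m. \<Prod>l<m. (\<integral>\<^sup>+x. f j k l x \<partial>tree_pmf m p n)) = (C + D) * A ^ (m - 1)" if j: "j < m" for j
  proof -
    have "(\<Sum>k<m. \<Prod>l<m. (\<integral>\<^sup>+x. f j k l x \<partial>tree_pmf m p n))
        = (\<Sum>k<m. if k = j then C * A ^ (m - 1) else B * D * A ^ (m - 2))"
      unfolding intI using j by (intro sum.cong refl prod_ifs) auto
    also have "\<dots> = C * A ^ (m - 1) + of_nat (m - 1) * (B * D * A ^ (m - 2))"
      using j by (rule sum_if1)
    also have "of_nat (m - 1) * (B * D * A ^ (m - 2)) = D * ((of_nat (m - 1) * B) * A ^ (m - 2))"
      by (simp add: mult_ac)
    also have "\<dots> = D * A ^ (m - 1)" unfolding invAB mult.assoc pw ..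
    finally show ?thesis by (simp add: distrib_right)
  qed
  have "of_nat m * (\<integral>\<^sup>+y. of_nat (m ^ Yval m (Suc n) y [] * (1 + Yval m (Suc n) y []) * N (Suc n) y) \<partial>tree_pmf m p (Suc n))
      = (\<integral>\<^sup>+y. of_nat m * of_nat (m ^ Yval m (Suc n) y [] * (1 + Yval m (Suc n) y []) * N (Suc n) y) \<partial>tree_pmf m p (Suc n))"
    by (simp add: nn_integral_cmult)
  also have "\<dots> = (\<integral>\<^sup>+y. (\<Sum>j<m. \<Sum>k<m. \<Prod>l<m. f j k l (sh l y)) \<partial>tree_pmf m p (Suc n))"
    unfolding pt ..
  also have "\<dots> = (\<Sum>j<m. \<Sum>k<m. (\<integral>\<^sup>+y. (\<Prod>l<m. f j k l (sh l y)) \<partial>tree_pmf m p (Suc n)))"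
    by (simp add: nn_integral_sum)
  also have "\<dots> = (\<Sum>j<m. \<Sum>k<m. \<Prod>l<m. (\<integral>\<^sup>+x. f j k l x \<partial>tree_pmf m p n))"
    by (simp add: int_prod)
  also have "\<dots> = (\<Sum>j<m. (C + D) * A ^ (m - 1))"
    by (intro sum.cong refl inner) auto
  also have "\<dots> = of_nat m * ((C + D) * A ^ (m - 1))" by simp
  finally have main: "of_nat m * (\<integral>\<^sup>+y. of_nat (m ^ Yval m (Suc n) y [] * (1 + Yval m (Suc n) y []) * N (Suc n) y) \<partial>tree_pmf m p (Suc n))
      = of_nat m * ((C + D) * A ^ (m - 1))" .
  have CD: "(\<integral>\<^sup>+y. of_nat (m ^ Yval m n y [] * (1 + Yval m n y []) * N n y) \<partial>tree_pmf m p n) = C + D"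
  proof -
    have "(\<integral>\<^sup>+y. of_nat (m ^ Yval m n y [] * (1 + Yval m n y []) * N n y) \<partial>tree_pmf m p n)
       = (\<integral>\<^sup>+y. of_nat (m ^ Yn y * Yn y * N n y) + of_nat (m ^ Yn y * N n y) \<partial>tree_pmf m p n)"
      by (intro nn_integral_cong) (simp add: Yn_def algebra_simps)
    also have "\<dots> = C + D" unfolding C_def D_def by (simp add: nn_integral_add)
    finally show ?thesis .
  qed
  have "(of_nat m :: ennreal) \<noteq> 0" "(of_nat m :: ennreal) \<noteq> \<top>" using m2 by auto
  with main show ?thesis unfolding CD A_def Yn_def by (simp add: ennreal_mult_cancel_left)
qed

lemma stepInv:
  fixes m n :: nat and p :: "nat pmf"
  assumes m2: "m \<ge> 2"
    and inv: "of_nat (m - 1) * (\<integral>\<^sup>+y. of_nat (Yval m n y [] * m ^ Yval m n y []) \<partial>tree_pmf m p n)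
            = (\<integral>\<^sup>+y. of_nat (m ^ Yval m n y []) \<partial>tree_pmf m p n)"
    and Af: "(\<integral>\<^sup>+y. of_nat (m ^ Yval m n y []) \<partial>tree_pmf m p n) < \<infinity>"
  shows "of_nat (m - 1) * (\<integral>\<^sup>+y. of_nat (Yval m (Suc n) y [] * m ^ Yval m (Suc n) y []) \<partial>tree_pmf m p (Suc n))
            = (\<integral>\<^sup>+y. of_nat (m ^ Yval m (Suc n) y []) \<partial>tree_pmf m p (Suc n))
      \<and> (\<integral>\<^sup>+y. of_nat (m ^ Yval m (Suc n) y []) \<partial>tree_pmf m p (Suc n)) < \<infinity>"
proof -
  define Yn where "Yn = (\<lambda>x. Yval m n x [])"
  define A where "A = (\<integral>\<^sup>+x. of_nat (m ^ Yn x) \<partial>tree_pmf m p n)"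
  define B where "B = (\<integral>\<^sup>+x. of_nat (Yn x * m ^ Yn x) \<partial>tree_pmf m p n)"
  define Q where "Q = (\<integral>\<^sup>+x. of_nat (if Yn x = 0 then 1 else 0) \<partial>tree_pmf m p n)"
  define A' where "A' = (\<integral>\<^sup>+y. of_nat (m ^ Yval m (Suc n) y []) \<partial>tree_pmf m p (Suc n))"
  define B' where "B' = (\<integral>\<^sup>+y. of_nat (Yval m (Suc n) y [] * m ^ Yval m (Suc n) y []) \<partial>tree_pmf m p (Suc n))"
  have m1: "m \<ge> 1" using m2 by simp
  have invAB: "of_nat (m - 1) * B = A" using inv by (simp add: A_def B_def Yn_def)
  have AfA: "A < \<infinity>" using Af by (simp add: A_def Yn_def)
  have Qf: "Q < \<infinity>"
  proof -
    have "Q \<le> (\<integral>\<^sup>+x. 1 \<partial>tree_pmf m p n)" unfolding Q_def by (intro nn_integral_mono) auto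
    also have "\<dots> = 1" by simp
    finally show ?thesis by (simp add: le_less_trans)
  qed
  have IA: "(\<integral>\<^sup>+y. (\<Prod>l<m. (of_nat (m ^ Yn (sh l y)) :: ennreal)) \<partial>tree_pmf m p (Suc n)) = A ^ m"
    using int_prod[where f="\<lambda>l x. of_nat (m ^ Yn x)" and m=m and p=p and n=n] by (simp add: A_def)
  have IQ: "(\<integral>\<^sup>+y. (\<Prod>l<m. (of_nat (if Yn (sh l y) = 0 then 1 else 0) :: ennreal)) \<partial>tree_pmf m p (Suc n)) = Q ^ m"
    using int_prod[where f="\<lambda>l x. of_nat (if Yn x = 0 then 1 else 0)" and m=m and p=p and n=n] by (simp add: Q_def)
  have IB: "(\<integral>\<^sup>+y. (\<Prod>l<m. (of_nat (m ^ Yn (sh l y) * (if l = k then Yn (sh l y) else 1)) :: ennreal)) \<partial>tree_pmf m p (Suc n))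
      = B * A ^ (m - 1)" if k: "k < m" for k
  proof -
    have "(\<integral>\<^sup>+y. (\<Prod>l<m. (of_nat (m ^ Yn (sh l y) * (if l = k then Yn (sh l y) else 1)) :: ennreal)) \<partial>tree_pmf m p (Suc n))
      = (\<Prod>l<m. \<integral>\<^sup>+x. of_nat (m ^ Yn x * (if l = k then Yn x else 1)) \<partial>tree_pmf m p n)"
      by (rule int_prod)
    also have "\<dots> = (\<Prod>l<m. if l = k then B else A)"
      by (intro prod.cong refl) (auto simp: A_def B_def mult_ac)
    also have "\<dots> = B * A ^ (m - 1)" using k by (rule prod_if1)
    finally show ?thesis .
  qed
  have e1: "of_nat m * A' = A ^ m + of_nat (m - 1) * Q ^ m"
  proof -
    have "of_nat m * A' = (\<integral>\<^sup>+y. of_nat (m * m ^ Yval m (Suc n) y []) \<partial>tree_pmf m p (Suc n))"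
      unfolding A'_def by (simp add: nn_integral_cmult)
    also have "\<dots> = (\<integral>\<^sup>+y. (\<Prod>l<m. (of_nat (m ^ Yn (sh l y)) :: ennreal))
          + of_nat (m - 1) * (\<Prod>l<m. (of_nat (if Yn (sh l y) = 0 then 1 else 0) :: ennreal)) \<partial>tree_pmf m p (Suc n))"
    proof (intro nn_integral_cong)
      fix y
      have "m * m ^ Yval m (Suc n) y [] = (\<Prod>l<m. m ^ Yn (sh l y)) + (m - 1) * (\<Prod>l<m. (if Yn (sh l y) = 0 then 1 else 0))"
        unfolding Yval_Suc0 Yn_def by (rule natid2[OF m1])
      then show "(of_nat (m * m ^ Yval m (Suc n) y []) :: ennreal) = (\<Prod>l<m. (of_nat (m ^ Yn (sh l y)) :: ennreal))
          + of_nat (m - 1) * (\<Prod>l<m. (of_nat (if Yn (sh l y) = 0 then 1 else 0) :: ennreal))"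
        by (simp only: of_nat_add of_nat_mult of_nat_prod)
    qed
    also have "\<dots> = A ^ m + of_nat (m - 1) * Q ^ m"
      by (simp add: nn_integral_add nn_integral_cmult IA IQ del: of_nat_power)
    finally show ?thesis .
  qed
  have e2: "of_nat m * B' + of_nat m * A' = of_nat m * B * A ^ (m - 1) + of_nat m * Q ^ m"
  proof -
    have "of_nat m * B' + of_nat m * A' = (\<integral>\<^sup>+y. of_nat (m * (Yval m (Suc n) y [] * m ^ Yval m (Suc n) y []))
        + of_nat (m * m ^ Yval m (Suc n) y []) \<partial>tree_pmf m p (Suc n))"
      unfolding A'_def B'_def by (simp add: nn_integral_cmult nn_integral_add)
    also have "\<dots> = (\<integral>\<^sup>+y. (\<Sum>k<m. \<Prod>l<m. (of_nat (m ^ Yn (sh l y) * (if l = k then Yn (sh l y) else 1)) :: ennreal))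
          + of_nat m * (\<Prod>l<m. (of_nat (if Yn (sh l y) = 0 then 1 else 0) :: ennreal)) \<partial>tree_pmf m p (Suc n))"
    proof (intro nn_integral_cong)
      fix y
      have "m * (Yval m (Suc n) y [] * m ^ Yval m (Suc n) y []) + m * m ^ Yval m (Suc n) y []
         = (\<Sum>k<m. \<Prod>l<m. m ^ Yn (sh l y) * (if l = k then Yn (sh l y) else 1)) + m * (\<Prod>l<m. (if Yn (sh l y) = 0 then 1 else 0))"
        unfolding Yval_Suc0 Yn_def by (rule natid3[OF m1])
      then have "(of_nat (m * (Yval m (Suc n) y [] * m ^ Yval m (Suc n) y []) + m * m ^ Yval m (Suc n) y []) :: ennreal)
         = of_nat ((\<Sum>k<m. \<Prod>l<m. m ^ Yn (sh l y) * (if l = k then Yn (sh l y) else 1)) + m * (\<Prod>l<m. (if Yn (sh l y) = 0 then 1 else 0)))"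
        by simp
      then show "(of_nat (m * (Yval m (Suc n) y [] * m ^ Yval m (Suc n) y [])) + of_nat (m * m ^ Yval m (Suc n) y []) :: ennreal)
         = (\<Sum>k<m. \<Prod>l<m. (of_nat (m ^ Yn (sh l y) * (if l = k then Yn (sh l y) else 1)) :: ennreal))
          + of_nat m * (\<Prod>l<m. (of_nat (if Yn (sh l y) = 0 then 1 else 0) :: ennreal))"
        by (simp only: of_nat_add of_nat_sum of_nat_prod of_nat_mult[of m])
    qed
    also have "\<dots> = (\<Sum>k<m. B * A ^ (m - 1)) + of_nat m * Q ^ m"
    proof -
      have meas: "\<And>f M. (f :: _ \<Rightarrow> ennreal) \<in> borel_measurable (measure_pmf M)" by simp
      have I1: "(\<integral>\<^sup>+y. (\<Sum>k<m. \<Prod>l<m. (of_nat (m ^ Yn (sh l y) * (if l = k then Yn (sh l y) else 1)) :: ennreal)) \<partial>tree_pmf m p (Suc n))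
          = (\<Sum>k<m. B * A ^ (m - 1))"
        unfolding nn_integral_sum[OF meas] by (rule sum.cong[OF refl]) (rule IB, simp)
      show ?thesis unfolding nn_integral_add[OF meas meas] nn_integral_cmult[OF meas] I1 IQ ..
    qed
    also have "\<dots> = of_nat m * B * A ^ (m - 1) + of_nat m * Q ^ m" by (simp add: mult.assoc)
    finally show ?thesis .
  qed
  have "of_nat (m - 1) * B' = A' \<and> A' < \<infinity>"
    by (rule alg[OF m2 invAB AfA Qf e1 e2])
  then show ?thesis unfolding A'_def B'_def .
qed

lemma base_int: "(\<integral>\<^sup>+y. g (y []) \<partial>tree_pmf m p 0) = (\<integral>\<^sup>+x. g x \<partial>p)"
proof -
  have L: "leaves m 0 = {[]}" by (auto simp: leaves_def)
  have "(\<integral>\<^sup>+y. (\<Prod>x\<in>{[]}. g (y x)) \<partial>Pi_pmf {[]} 0 (\<lambda>_. p)) = (\<Prod>x\<in>{[]}. \<integral>\<^sup>+v. g v \<partial>p)"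
    using nn_integral_prod_Pi_pmf[of "{[]}" 0 "\<lambda>_. p" "\<lambda>_. g"] by simp
  then show ?thesis by (simp add: tree_pmf_def L)
qed

lemma invariant:
  fixes m :: nat and p :: "nat pmf"
  assumes m2: "m \<ge> 2"
    and h1: "of_nat (m - 1) * (\<integral>\<^sup>+ x. of_nat (x * m ^ x) \<partial>measure_pmf p)
           = (\<integral>\<^sup>+ x. of_nat (m ^ x) \<partial>measure_pmf p)"
    and h2: "(\<integral>\<^sup>+ x. of_nat (m ^ x) \<partial>measure_pmf p) < \<infinity>"
  shows "of_nat (m - 1) * (\<integral>\<^sup>+y. of_nat (Yval m n y [] * m ^ Yval m n y []) \<partial>tree_pmf m p n)
            = (\<integral>\<^sup>+y. of_nat (m ^ Yval m n y []) \<partial>tree_pmf m p n)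
      \<and> (\<integral>\<^sup>+y. of_nat (m ^ Yval m n y []) \<partial>tree_pmf m p n) < \<infinity>"
proof (induction n)
  case 0
  have a: "(\<integral>\<^sup>+y. of_nat (Yval m 0 y [] * m ^ Yval m 0 y []) \<partial>tree_pmf m p 0) = (\<integral>\<^sup>+ x. of_nat (x * m ^ x) \<partial>measure_pmf p)"
    using base_int[where g="\<lambda>x. of_nat (x * m ^ x)"] by simp
  have b: "(\<integral>\<^sup>+y. of_nat (m ^ Yval m 0 y []) \<partial>tree_pmf m p 0) = (\<integral>\<^sup>+ x. of_nat (m ^ x) \<partial>measure_pmf p)"
    using base_int[where g="\<lambda>x. of_nat (m ^ x)"] by simp
  show ?case unfolding a b using h1 h2 by simp
next
  case (Suc n)
  then show ?case using stepInv[OF m2] by blast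
qed

lemma generic:
  fixes m :: nat and p :: "nat pmf" and N :: "nat \<Rightarrow> (nat list \<Rightarrow> nat) \<Rightarrow> nat"
  assumes m2: "m \<ge> 2"
    and h1: "of_nat (m - 1) * (\<integral>\<^sup>+ x. of_nat (x * m ^ x) \<partial>measure_pmf p)
           = (\<integral>\<^sup>+ x. of_nat (m ^ x) \<partial>measure_pmf p)"
    and h2: "(\<integral>\<^sup>+ x. of_nat (m ^ x) \<partial>measure_pmf p) < \<infinity>"
    and NS: "\<And>n y. N (Suc n) y = (if 1 \<le> (\<Sum>l<m. Yval m n (sh l y) []) then \<Sum>j<m. N n (sh j y) else 0)"
  shows "(\<integral>\<^sup>+ y. of_nat (m ^ Yval m n y [] * (1 + Yval m n y []) * N n y) \<partial>measure_pmf (tree_pmf m p n))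
         = (\<integral>\<^sup>+ y. of_nat (m ^ Yval m 0 y [] * (1 + Yval m 0 y []) * N 0 y) \<partial>measure_pmf (tree_pmf m p 0))
           * (\<Prod>k<n. (\<integral>\<^sup>+ y. of_nat (m ^ Yval m k y []) \<partial>measure_pmf (tree_pmf m p k)) ^ (m - 1))"
proof (induction n)
  case 0
  then show ?case by simp
next
  case (Suc n)
  have inv: "of_nat (m - 1) * (\<integral>\<^sup>+y. of_nat (Yval m n y [] * m ^ Yval m n y []) \<partial>tree_pmf m p n)
            = (\<integral>\<^sup>+y. of_nat (m ^ Yval m n y []) \<partial>tree_pmf m p n)"
    using invariant[OF m2 h1 h2] by blast
  show ?case unfolding stepE[OF m2 NS inv] Suc by (simp add: mult.assoc)
qed

theorem proposition5p1:
  fixes m :: nat and p :: "nat pmf" and i n :: nat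
  assumes "m \<ge> 2"
    and "of_nat (m - 1) * (\<integral>\<^sup>+ x. of_nat (x * m ^ x) \<partial>measure_pmf p)
           = (\<integral>\<^sup>+ x. of_nat (m ^ x) \<partial>measure_pmf p)"
    and "(\<integral>\<^sup>+ x. of_nat (m ^ x) \<partial>measure_pmf p) < \<infinity>"
    and "n \<ge> 1"
  shows "((\<integral>\<^sup>+ y. of_nat (m ^ Yval m n y [] * (1 + Yval m n y []) * Nsharp m n y)
             \<partial>measure_pmf (tree_pmf m p n))
         = (\<integral>\<^sup>+ y. of_nat (m ^ Yval m 0 y [] * (1 + Yval m 0 y []) * Nsharp m 0 y)
             \<partial>measure_pmf (tree_pmf m p 0))
           * (\<Prod>k<n. (\<integral>\<^sup>+ y. of_nat (m ^ Yval m k y []) \<partial>measure_pmf (tree_pmf m p k)) ^ (m - 1)))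
       \<and> ((\<integral>\<^sup>+ y. of_nat (m ^ Yval m n y [] * (1 + Yval m n y []) * Ni m i n y)
             \<partial>measure_pmf (tree_pmf m p n))
         = (\<integral>\<^sup>+ y. of_nat (m ^ Yval m 0 y [] * (1 + Yval m 0 y []) * Ni m i 0 y)
             \<partial>measure_pmf (tree_pmf m p 0))
           * (\<Prod>k<n. (\<integral>\<^sup>+ y. of_nat (m ^ Yval m k y []) \<partial>measure_pmf (tree_pmf m p k)) ^ (m - 1)))"
  using generic[OF assms(1,2,3), of "Nsharp m" n] generic[OF assms(1,2,3), of "Ni m i" n]
  by (simp add: Nsharp_Suc Ni_Suc)

end
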